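(* Let $G$ be a graph, $k\ge1$ an integer, and $G_k$ the graph obtained from $G$ by cloning each vertex exactly $k-1$ times. Then, as polynomials, $$P(G_k;u,x)=P\big(G;u,(1+x)^k-1\big),$$ and consequently $$q(G_k;x,y)=q\Big(G;(x-1)\frac{y^k-1}{y-1}+1,\;y^k\Big).$$
   Context: All graphs are finite and undirected, without multiple edges but possibly with self loops. For $A\subseteq V$, $G[A]$ is the induced subgraph; $rk(G)$ is the $\mathbb{F}_2$-rank of the adjacency matrix $(m_{ij})$ ($m_{ij}=1$ iff $\{i,j\}\in E$; $m_{ii}=1$ iff $i$ has a self loop; empty graph: rank $0$). $q(G;x,y)=\sum_{A\subseteq V}(x-1)^{rk(G[A])}(y-1)^{|A|-rk(G[A])}$ and $P(G;u,x)=\sum_{A\subseteq V}x^{|A|}u^{rk(G[A])}$, with $0^0=1$; here $\frac{y^k-1}{y-1}=1+y+\dots+y^{k-1}$. The graph $G_k$ has vertex set $\{a_i: a\in V,\ 1\le i\le k\}$; for distinct $a,b\in V$, $a_i$ and $b_j$ are adjacent iff $\{a,b\}\in E$; $a_i,a_j$ are adjacent (for $i=j$: $a_i$ has a self loop) iff $a$ has a self loop in $G$. *)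

theory Defs
  imports "Jordan_Normal_Form.DL_Rank" "HOL-Library.Z2"
begin

text \<open>A graph is given by a finite vertex set V and a symmetric adjacency
relation E (E a a means that a carries a self loop). The field F_2 is the
type bit from HOL-Library.Z2.\<close>

definition graph :: "'a set \<Rightarrow> ('a \<Rightarrow> 'a \<Rightarrow> bool) \<Rightarrow> bool" where
  "graph V E \<longleftrightarrow> finite V \<and> (\<forall>a\<in>V. \<forall>b\<in>V. E a b = E b a)"

text \<open>An enumeration of a finite vertex set (the rank does not depend on it).\<close>
definition enum_set :: "'a set \<Rightarrow> 'a list" where
  "enum_set A = (SOME xs. set xs = A \<and> distinct xs)"

definition adj_mat :: "('a \<Rightarrow> 'a \<Rightarrow> bool) \<Rightarrow> 'a list \<Rightarrow> bit mat" where
  "adj_mat E xs = mat (length xs) (length xs)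
     (\<lambda>(i, j). if E (xs ! i) (xs ! j) then 1 else 0)"

definition rk :: "('a \<Rightarrow> 'a \<Rightarrow> bool) \<Rightarrow> 'a set \<Rightarrow> nat" where
  "rk E A = vec_space.rank (card A) (adj_mat E (enum_set A))"

definition P_poly :: "'a set \<Rightarrow> ('a \<Rightarrow> 'a \<Rightarrow> bool) \<Rightarrow> 'r::comm_ring_1 \<Rightarrow> 'r \<Rightarrow> 'r" where
  "P_poly V E u x = (\<Sum>A\<in>Pow V. x ^ card A * u ^ rk E A)"

definition q_poly :: "'a set \<Rightarrow> ('a \<Rightarrow> 'a \<Rightarrow> bool) \<Rightarrow> 'r::comm_ring_1 \<Rightarrow> 'r \<Rightarrow> 'r" where
  "q_poly V E x y = (\<Sum>A\<in>Pow V. (x - 1) ^ rk E A * (y - 1) ^ (card A - rk E A))"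

text \<open>The cloned graph G_k: vertex a_i is represented as the pair (a, i).\<close>
definition clone_V :: "'a set \<Rightarrow> nat \<Rightarrow> ('a \<times> nat) set" where
  "clone_V V k = V \<times> {1..k}"

definition clone_E :: "('a \<Rightarrow> 'a \<Rightarrow> bool) \<Rightarrow> ('a \<times> nat) \<Rightarrow> ('a \<times> nat) \<Rightarrow> bool" where
  "clone_E E p p' = (let (a, i) = p; (b, j) = p' in
      if a \<noteq> b then E a b else E a a)"

end

theory Submission
  imports Defs
begin


lemma L_inj:
  fixes \<sigma> :: "nat \<Rightarrow> nat"
  assumes sig: "\<sigma> ` {..<n} = {..<m}"
  shows "inj_on (\<lambda>v::'a vec. vec n (\<lambda>i. v $ \<sigma> i)) (carrier_vec m)"
proof (rule inj_onI)
  fix v w :: "'a vec" assume v: "v \<in> carrier_vec m" and w: "w \<in> carrier_vec m"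
    and eq: "vec n (\<lambda>i. v $ \<sigma> i) = vec n (\<lambda>i. w $ \<sigma> i)"
  show "v = w"
  proof (rule eq_vecI)
    show "dim_vec v = dim_vec w" using v w by auto
    fix b assume "b < dim_vec w"
    then have "b \<in> \<sigma> ` {..<n}" using w sig by auto
    then obtain i where i: "i < n" "b = \<sigma> i" by auto
    have "vec n (\<lambda>i. v $ \<sigma> i) $ i = vec n (\<lambda>i. w $ \<sigma> i) $ i" using eq by simp
    then show "v $ b = w $ b" using i by simp
  qed
qed

lemma lin_dep_transfer:
  fixes T :: "'a::field vec set" and \<sigma> :: "nat \<Rightarrow> nat"
  assumes T: "T \<subseteq> carrier_vec m" and sig: "\<sigma> ` {..<n} = {..<m}"
  shows "module.lin_dep class_ring (module_vec TYPE('a) n) ((\<lambda>v. vec n (\<lambda>i. v $ \<sigma> i)) ` T)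
     = module.lin_dep class_ring (module_vec TYPE('a) m) T"
proof -
  interpret N: vec_space "TYPE('a)" n .
  interpret M: vec_space "TYPE('a)" m .
  define L where "L = (\<lambda>v::'a vec. vec n (\<lambda>i. v $ \<sigma> i))"
  have Linj: "inj_on L (carrier_vec m)" unfolding L_def by (rule L_inj[OF sig])
  have Lc: "L x \<in> carrier_vec n" for x unfolding L_def by simp
  have key: "(\<Sum>x\<in>A. a (L x) * L x $ i) = M.lincomb (a \<circ> L) A $ \<sigma> i"
    if "A \<subseteq> carrier_vec m" "i < n" for A a i
  proof -
    have "\<sigma> i < m" using sig that(2) by auto
    then show ?thesis using that by (simp add: M.lincomb_index L_def)
  qed
  show ?thesis unfolding L_def[symmetric]
  proof
    assume "N.lin_dep (L ` T)"
    then obtain A' a w where A': "finite A'" "A' \<subseteq> L ` T" "N.lincomb a A' = 0\<^sub>v n" "w \<in> A'" "a w \<noteq> 0"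
      unfolding N.lin_dep_def by (auto simp: module_vec_simps class_ring_simps)
    define A where "A = {x\<in>T. L x \<in> A'}"
    have AT: "A \<subseteq> T" unfolding A_def by auto
    have LA: "L ` A = A'" using A'(2) unfolding A_def by auto
    have injA: "inj_on L A" using Linj AT T inj_on_subset by blast
    have finA: "finite A" using finite_imageD[of L A] LA injA A'(1) by simp
    obtain v where v: "v \<in> A" "L v = w" using LA A'(4) by auto
    have "M.lincomb (a \<circ> L) A = 0\<^sub>v m"
    proof (rule eq_vecI)
      show "dim_vec (M.lincomb (a \<circ> L) A) = dim_vec (0\<^sub>v m)"
        using M.lincomb_dim[OF finA] AT T by auto
      fix b assume "b < dim_vec (0\<^sub>v m)"
      then have "b \<in> \<sigma> ` {..<n}" using sig by auto
      then obtain i where i: "i < n" "b = \<sigma> i" by auto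
      have "M.lincomb (a \<circ> L) A $ b = (\<Sum>x\<in>A. a (L x) * L x $ i)"
        using key[of A i a] AT T i by auto
      also have "\<dots> = (\<Sum>y\<in>L ` A. a y * y $ i)"
        using sum.reindex[OF injA, of "\<lambda>y. a y * y $ i"] by simp
      also have "\<dots> = N.lincomb a A' $ i" using LA i Lc
        by (subst N.lincomb_index) auto
      also have "\<dots> = 0" using A'(3) i by simp
      finally show "M.lincomb (a \<circ> L) A $ b = 0\<^sub>v m $ b" using i \<open>b < dim_vec (0\<^sub>v m)\<close> by simp
    qed
    then show "M.lin_dep T" unfolding M.lin_dep_def using finA AT v A'(5)
      by (auto simp: module_vec_simps class_ring_simps intro!: exI[of _ A] exI[of _ "a \<circ> L"] exI[of _ v])
  next
    assume "M.lin_dep T"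
    then obtain A a v where A: "finite A" "A \<subseteq> T" "M.lincomb a A = 0\<^sub>v m" "v \<in> A" "a v \<noteq> 0"
      unfolding M.lin_dep_def by (auto simp: module_vec_simps class_ring_simps)
    have injA: "inj_on L A" using Linj A(2) T inj_on_subset by blast
    define a' where "a' = a \<circ> the_inv_into A L"
    have a'L: "a' (L x) = a x" if "x \<in> A" for x
      unfolding a'_def using the_inv_into_f_f[OF injA that] by simp
    have "N.lincomb a' (L ` A) = 0\<^sub>v n"
    proof (rule eq_vecI)
      show "dim_vec (N.lincomb a' (L ` A)) = dim_vec (0\<^sub>v n)"
      proof -
        have "finite (L ` A)" using A(1) by simp
        moreover have "L ` A \<subseteq> carrier_vec n" using Lc by auto
        ultimately show ?thesis using N.lincomb_dim by simp
      qed
      fix i assume "i < dim_vec (0\<^sub>v n)"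
      then have i: "i < n" by simp
      have "N.lincomb a' (L ` A) $ i = (\<Sum>y\<in>L ` A. a' y * y $ i)"
        using i Lc by (subst N.lincomb_index) auto
      also have "\<dots> = (\<Sum>x\<in>A. a' (L x) * L x $ i)"
        using sum.reindex[OF injA, of "\<lambda>y. a' y * y $ i"] by simp
      also have "\<dots> = (\<Sum>x\<in>A. a x * x $ \<sigma> i)"
        using a'L i by (auto simp: L_def intro!: sum.cong)
      also have "\<dots> = M.lincomb a A $ \<sigma> i"
        using A(2) T i sig by (subst M.lincomb_index) auto
      also have "\<dots> = 0" using A(3) i sig by (metis imageI index_zero_vec(1) lessThan_iff)
      finally show "N.lincomb a' (L ` A) $ i = 0\<^sub>v n $ i" using i by simp
    qed
    then show "N.lin_dep (L ` T)" unfolding N.lin_dep_def using A a'L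
      by (auto simp: module_vec_simps class_ring_simps intro!: exI[of _ "L ` A"] exI[of _ a'] exI[of _ "L v"])
  qed
qed

lemma rank_transfer:
  fixes g :: "nat \<Rightarrow> nat \<Rightarrow> 'a::field" and \<sigma> :: "nat \<Rightarrow> nat"
  assumes sig: "\<sigma> ` {..<n} = {..<m}"
  shows "vec_space.rank n (mat n n (\<lambda>(i,j). g (\<sigma> i) (\<sigma> j)))
       = vec_space.rank m (mat m m (\<lambda>(i,j). g i j))"
proof -
  interpret N: vec_space "TYPE('a)" n .
  interpret M: vec_space "TYPE('a)" m .
  define L where "L = (\<lambda>v::'a vec. vec n (\<lambda>i. v $ \<sigma> i))"
  define MA where "MA = mat n n (\<lambda>(i,j). g (\<sigma> i) (\<sigma> j))"
  define MB where "MB = mat m m (\<lambda>(i,j). g i j)"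
  have Linj: "inj_on L (carrier_vec m)" unfolding L_def by (rule L_inj[OF sig])
  have sigm: "\<sigma> i < m" if "i < n" for i using sig that by auto
  have CB: "set (cols MB) \<subseteq> carrier_vec m" unfolding MB_def by (auto simp: cols_def)
  have colsA: "set (cols MA) = L ` set (cols MB)"
  proof -
    have "set (cols MA) = (\<lambda>j. col MA j) ` {..<n}" unfolding MA_def by (auto simp: cols_def)
    also have "\<dots> = (\<lambda>j. L (col MB (\<sigma> j))) ` {..<n}"
      unfolding MA_def MB_def L_def using sigm by (auto intro!: image_cong eq_vecI)
    also have "\<dots> = L ` ((\<lambda>b. col MB b) ` (\<sigma> ` {..<n}))" by (simp add: image_image)
    also have "\<dots> = L ` set (cols MB)" unfolding sig MB_def by (auto simp: cols_def)
    finally show ?thesis .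
  qed
  have tr: "N.lin_indpt (L ` T) = M.lin_indpt T" if "T \<subseteq> carrier_vec m" for T
    using lin_dep_transfer[OF that sig] unfolding L_def by simp
  have "M.lin_indpt {}" unfolding M.lin_dep_def by simp
  then obtain S where S: "finite S" "maximal S (\<lambda>T. T \<subseteq> set (cols MB) \<and> M.lin_indpt T)"
    using maximal_exists_superset[of "set (cols MB)" "\<lambda>T. T \<subseteq> set (cols MB) \<and> M.lin_indpt T" "{}"]
    by auto
  have rB: "M.rank MB = card S" using M.rank_card_indpt[OF _ S(2), of m] unfolding MB_def by auto
  have SB: "S \<subseteq> set (cols MB)" and Sind: "M.lin_indpt S" using S(2) unfolding maximal_def by auto
  have "maximal (L ` S) (\<lambda>T. T \<subseteq> set (cols MA) \<and> N.lin_indpt T)"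
    unfolding maximal_def
  proof (intro conjI allI impI)
    show "L ` S \<subseteq> set (cols MA)" using SB colsA by auto
    show "N.lin_indpt (L ` S)" using tr SB CB Sind by auto
    fix T assume T: "L ` S \<subseteq> T \<and> T \<subseteq> set (cols MA) \<and> N.lin_indpt T"
    define T0 where "T0 = {x \<in> set (cols MB). L x \<in> T}"
    have LT0: "L ` T0 = T" using T colsA unfolding T0_def by auto
    have "M.lin_indpt T0" using tr[of T0] T LT0 CB unfolding T0_def by auto
    moreover have "S \<subseteq> T0" using SB T unfolding T0_def by auto
    moreover have "T0 \<subseteq> set (cols MB)" unfolding T0_def by auto
    ultimately have "T0 = S" using S(2) unfolding maximal_def by blast
    then show "T = L ` S" using LT0 by simp
  qed
  then have "N.rank MA = card (L ` S)" using N.rank_card_indpt[of MA n "L ` S"] unfolding MA_def by auto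
  also have "\<dots> = card S" using card_image[OF inj_on_subset[OF Linj]] SB CB by auto
  finally show ?thesis using rB unfolding MA_def MB_def by simp
qed


lemma enum_set_props: "finite A \<Longrightarrow> set (enum_set A) = A \<and> distinct (enum_set A)"
  unfolding enum_set_def by (rule someI_ex) (rule finite_distinct_list)

lemma clone_E_fst: "clone_E E p q = E (fst p) (fst q)"
  unfolding clone_E_def by (cases p; cases q) auto

lemma rk_clone:
  assumes fin: "finite A"
  shows "rk (clone_E E) A = rk E (fst ` A)"
proof -
  define xs where "xs = enum_set A"
  define ys where "ys = enum_set (fst ` A)"
  have xs: "set xs = A" "distinct xs" using enum_set_props[OF fin] unfolding xs_def by auto
  have ys: "set ys = fst ` A" "distinct ys" using enum_set_props[of "fst ` A"] fin unfolding ys_def by auto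
  define n where "n = length xs"
  define m where "m = length ys"
  have cA: "card A = n" using distinct_card[OF xs(2)] xs(1) n_def by simp
  have cB: "card (fst ` A) = m" using distinct_card[OF ys(2)] ys(1) m_def by simp
  define \<sigma> where "\<sigma> i = (SOME b. b < m \<and> ys ! b = fst (xs ! i))" for i
  have sigp: "\<sigma> i < m \<and> ys ! \<sigma> i = fst (xs ! i)" if "i < n" for i
  proof -
    have "fst (xs ! i) \<in> set ys" using that xs ys n_def by auto
    then have "\<exists>b. b < m \<and> ys ! b = fst (xs ! i)" unfolding m_def by (simp add: in_set_conv_nth)
    then show ?thesis unfolding \<sigma>_def by (rule someI_ex)
  qed
  have sig: "\<sigma> ` {..<n} = {..<m}"
  proof
    show "\<sigma> ` {..<n} \<subseteq> {..<m}" using sigp by auto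
    show "{..<m} \<subseteq> \<sigma> ` {..<n}"
    proof
      fix b assume "b \<in> {..<m}"
      then have "ys ! b \<in> fst ` A" using ys m_def by auto
      then obtain p where p: "p \<in> A" "fst p = ys ! b" by auto
      then obtain i where i: "i < n" "xs ! i = p" using xs n_def by (auto simp: in_set_conv_nth)
      have "ys ! \<sigma> i = ys ! b" using sigp[OF i(1)] i p by simp
      then have "\<sigma> i = b" using nth_eq_iff_index_eq[OF ys(2)] sigp[OF i(1)] \<open>b \<in> {..<m}\<close> m_def by auto
      then show "b \<in> \<sigma> ` {..<n}" using i by auto
    qed
  qed
  define g where "g b c = (if E (ys ! b) (ys ! c) then 1 else (0::bit))" for b c
  have "adj_mat (clone_E E) xs = mat n n (\<lambda>(i,j). g (\<sigma> i) (\<sigma> j))"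
    unfolding adj_mat_def g_def n_def[symmetric]
    by (rule eq_matI) (auto simp: clone_E_fst sigp n_def)
  moreover have "adj_mat E ys = mat m m (\<lambda>(i,j). g i j)"
    unfolding adj_mat_def g_def m_def by simp
  ultimately show ?thesis unfolding rk_def xs_def[symmetric] ys_def[symmetric] cA cB
    using rank_transfer[OF sig, of g] by simp
qed



lemma count_inner:
  fixes F :: "'a set \<Rightarrow> 'r::comm_semiring_1" and w :: 'r
  assumes finV: "finite V" and finK: "finite K" and BV: "B \<subseteq> V"
  shows "(\<Sum>A\<in>{A\<in>Pow (V\<times>K). fst ` A = B}. F (fst ` A) * w ^ (card A - card (fst ` A)))
       = F B * (\<Sum>S\<in>Pow K - {{}}. w ^ (card S - 1)) ^ card B"
proof -
  have finB: "finite B" using finV BV finite_subset by blast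
  let ?P = "PiE B (\<lambda>_. Pow K - {{}})"
  have "(\<Sum>A\<in>{A\<in>Pow (V\<times>K). fst ` A = B}. F (fst ` A) * w ^ (card A - card (fst ` A)))
      = (\<Sum>f\<in>?P. F B * w ^ (card (Sigma B f) - card B))"
  proof (rule sum.reindex_bij_witness[where i = "\<lambda>f. Sigma B f" and j = "\<lambda>A. restrict (\<lambda>a. A `` {a}) B"])
    fix A assume A: "A \<in> {A\<in>Pow (V\<times>K). fst ` A = B}"
    then have AVK: "A \<subseteq> V \<times> K" and BA: "B = fst ` A" by auto
    show "Sigma B (restrict (\<lambda>a. A `` {a}) B) = A" unfolding BA by (auto simp: rev_image_eqI)
    show "restrict (\<lambda>a. A `` {a}) B \<in> ?P" unfolding BA using AVK by (auto simp: PiE_iff)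
    show "F B * w ^ (card (Sigma B (restrict (\<lambda>a. A `` {a}) B)) - card B)
        = F (fst ` A) * w ^ (card A - card (fst ` A))"
      using BA \<open>Sigma B (restrict (\<lambda>a. A `` {a}) B) = A\<close> by (simp only:)
  next
    fix f assume f: "f \<in> ?P"
    show "restrict (\<lambda>a. Sigma B f `` {a}) B = f"
    proof (rule ext)
      fix a show "restrict (\<lambda>a. Sigma B f `` {a}) B a = f a"
      proof (cases "a \<in> B")
        case True then show ?thesis by auto
      next
        case False then show ?thesis using PiE_arb[OF f False] by simp
      qed
    qed
    have fa: "\<And>a. a \<in> B \<Longrightarrow> f a \<noteq> {} \<and> f a \<subseteq> K" using PiE_mem[OF f] by blast
    have "Sigma B f \<subseteq> V \<times> K" using fa BV by blast
    moreover have "fst ` Sigma B f = B"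
    proof
      show "fst ` Sigma B f \<subseteq> B" by auto
      show "B \<subseteq> fst ` Sigma B f"
      proof
        fix a assume a: "a \<in> B"
        then obtain i where "i \<in> f a" using fa by blast
        then have "(a, i) \<in> Sigma B f" using a by blast
        then show "a \<in> fst ` Sigma B f" by force
      qed
    qed
    ultimately show "Sigma B f \<in> {A\<in>Pow (V\<times>K). fst ` A = B}" by blast
  qed
  also have "\<dots> = (\<Sum>f\<in>?P. F B * (\<Prod>a\<in>B. w ^ (card (f a) - 1)))"
  proof (rule sum.cong[OF refl])
    fix f assume f: "f \<in> ?P"
    have fin: "\<And>a. a \<in> B \<Longrightarrow> finite (f a)" using PiE_mem[OF f] finK finite_subset by blast
    have ge: "1 \<le> card (f a)" if "a \<in> B" for a
    proof -
      have "f a \<noteq> {}" using PiE_mem[OF f that] by blast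
      then show ?thesis using fin[OF that] by (simp add: Suc_le_eq card_gt_0_iff)
    qed
    have "card (Sigma B f) - card B = (\<Sum>a\<in>B. card (f a)) - (\<Sum>a\<in>B. 1)"
      using card_SigmaI[OF finB, of f] fin by simp
    also have "\<dots> = (\<Sum>a\<in>B. card (f a) - 1)" using sum_subtractf_nat[of B "\<lambda>_. 1" "\<lambda>a. card (f a)"] ge by simp
    finally show "F B * w ^ (card (Sigma B f) - card B) = F B * (\<Prod>a\<in>B. w ^ (card (f a) - 1))"
      by (simp add: power_sum)
  qed
  also have "\<dots> = F B * (\<Prod>a\<in>B. \<Sum>S\<in>Pow K - {{}}. w ^ (card S - 1))"
  proof -
    have "(\<Prod>a\<in>B. \<Sum>S\<in>Pow K - {{}}. w ^ (card S - 1)) = (\<Sum>f\<in>?P. \<Prod>a\<in>B. w ^ (card (f a) - 1))"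
      by (rule prod_sum_PiE[OF finB]) (use finK in auto)
    then show ?thesis by (simp add: sum_distrib_left)
  qed
  also have "\<dots> = F B * (\<Sum>S\<in>Pow K - {{}}. w ^ (card S - 1)) ^ card B" by simp
  finally show ?thesis .
qed

lemma count_sum:
  fixes F :: "'a set \<Rightarrow> 'r::comm_semiring_1" and w :: 'r
  assumes finV: "finite V" and finK: "finite K"
  shows "(\<Sum>A\<in>Pow (V\<times>K). F (fst ` A) * w ^ (card A - card (fst ` A)))
       = (\<Sum>B\<in>Pow V. F B * (\<Sum>S\<in>Pow K - {{}}. w ^ (card S - 1)) ^ card B)"
proof -
  have "(\<Sum>A\<in>Pow (V\<times>K). F (fst ` A) * w ^ (card A - card (fst ` A)))
     = (\<Sum>B\<in>Pow V. \<Sum>A\<in>{A\<in>Pow (V\<times>K). fst ` A = B}. F (fst ` A) * w ^ (card A - card (fst ` A)))"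
    by (rule sum.group[symmetric]) (use finV finK in auto)
  also have "\<dots> = (\<Sum>B\<in>Pow V. F B * (\<Sum>S\<in>Pow K - {{}}. w ^ (card S - 1)) ^ card B)"
    by (rule sum.cong[OF refl]) (use count_inner[OF finV finK] in auto)
  finally show ?thesis .
qed

lemma sum_pow_card:
  fixes x :: "'r::comm_semiring_1"
  assumes "finite K" shows "(\<Sum>S\<in>Pow K. x ^ card S) = (1 + x) ^ card K"
  using assms
proof (induction K rule: finite_induct)
  case empty then show ?case by simp
next
  case (insert a K)
  have "(\<Sum>S\<in>Pow (insert a K). x ^ card S) = (\<Sum>S\<in>Pow K. x ^ card S) + (\<Sum>S\<in>insert a ` Pow K. x ^ card S)"
    unfolding Pow_insert using insert by (subst sum.union_disjoint) auto
  also have "(\<Sum>S\<in>insert a ` Pow K. x ^ card S) = (\<Sum>S\<in>Pow K. x ^ card (insert a S))"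
  proof -
    have "inj_on (insert a) (Pow K)" unfolding inj_on_def using insert(2)
      by (metis PowD insert_ident subsetD)
    then show ?thesis using sum.reindex[of "insert a" "Pow K" "\<lambda>S. x ^ card S"] by simp
  qed
  also have "\<dots> = x * (\<Sum>S\<in>Pow K. x ^ card S)"
    unfolding sum_distrib_left
  proof (rule sum.cong[OF refl])
    fix S assume "S \<in> Pow K"
    then have "finite S" "a \<notin> S" using insert(1,2) finite_subset by auto
    then show "x ^ card (insert a S) = x * x ^ card S" by simp
  qed
  finally show ?case using insert by (simp add: algebra_simps)
qed

lemma sum_pow_card_nonempty:
  fixes z :: "'r::comm_semiring_1"
  assumes "finite K" shows "(\<Sum>S\<in>Pow K - {{}}. z ^ (card S - 1)) = (\<Sum>i<card K. (1 + z) ^ i)"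
  using assms
proof (induction K rule: finite_induct)
  case empty then show ?case by simp
next
  case (insert a K)
  have "Pow (insert a K) - {{}} = (Pow K - {{}}) \<union> insert a ` Pow K" by (auto simp: Pow_insert)
  then have "(\<Sum>S\<in>Pow (insert a K) - {{}}. z ^ (card S - 1))
      = (\<Sum>S\<in>Pow K - {{}}. z ^ (card S - 1)) + (\<Sum>S\<in>insert a ` Pow K. z ^ (card S - 1))"
    using insert by (simp, subst sum.union_disjoint) auto
  also have "(\<Sum>S\<in>insert a ` Pow K. z ^ (card S - 1)) = (\<Sum>S\<in>Pow K. z ^ (card (insert a S) - 1))"
  proof -
    have "inj_on (insert a) (Pow K)" unfolding inj_on_def using insert(2)
      by (metis PowD insert_ident subsetD)
    then show ?thesis using sum.reindex[of "insert a" "Pow K" "\<lambda>S. z ^ (card S - 1)"] by simp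
  qed
  also have "\<dots> = (\<Sum>S\<in>Pow K. z ^ card S)"
  proof (rule sum.cong[OF refl])
    fix S assume "S \<in> Pow K"
    then have "finite S" "a \<notin> S" using insert(1,2) finite_subset by auto
    then show "z ^ (card (insert a S) - 1) = z ^ card S" by simp
  qed
  also have "\<dots> = (1 + z) ^ card K" by (rule sum_pow_card[OF insert(1)])
  finally show ?case using insert by simp
qed


lemma rk_le: "finite B \<Longrightarrow> rk E B \<le> card B"
proof -
  assume fin: "finite B"
  have l: "length (enum_set B) = card B" using enum_set_props[OF fin] distinct_card by metis
  interpret vec_space "TYPE(bit)" "card B" .
  have "adj_mat E (enum_set B) \<in> carrier_mat (card B) (card B)" unfolding adj_mat_def l by simp
  then show ?thesis unfolding rk_def by (rule rank_le_nc)
qed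

theorem mainTheorem4:
  fixes V :: "'a set" and E :: "'a \<Rightarrow> 'a \<Rightarrow> bool" and k :: nat
    and u x y :: "'r::comm_ring_1"
  assumes "graph V E" and "k \<ge> 1"
  shows "P_poly (clone_V V k) (clone_E E) u x = P_poly V E u ((1 + x) ^ k - 1)
       \<and> q_poly (clone_V V k) (clone_E E) x y
           = q_poly V E ((x - 1) * (\<Sum>i<k. y ^ i) + 1) (y ^ k)"
proof -
  have finV: "finite V" using assms(1) unfolding graph_def by simp
  define K where "K = {1..k}"
  have finK: "finite K" and cK: "card K = k" unfolding K_def by auto
  have finVK: "finite (V \<times> K)" using finV finK by simp
  have finA: "finite A" if "A \<in> Pow (V \<times> K)" for A using that finVK finite_subset by blast
  have cardA: "card A = card (fst ` A) + (card A - card (fst ` A))" if "A \<in> Pow (V \<times> K)" for A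
    using card_image_le[OF finA[OF that], of fst] by simp
  have rkA: "rk (clone_E E) A = rk E (fst ` A)" if "A \<in> Pow (V \<times> K)" for A
    using rk_clone[OF finA[OF that]] .
  have rkB: "rk E (fst ` A) \<le> card (fst ` A)" if "A \<in> Pow (V \<times> K)" for A
    using rk_le[of "fst ` A" E] finA[OF that] by simp
  have rkBA: "rk E (fst ` A) \<le> card A" if "A \<in> Pow (V \<times> K)" for A
    using rkB[OF that] card_image_le[OF finA[OF that], of fst] by simp
  have P: "P_poly (clone_V V k) (clone_E E) u x = P_poly V E u ((1 + x) ^ k - 1)"
  proof -
    have "P_poly (clone_V V k) (clone_E E) u x
       = (\<Sum>A\<in>Pow (V\<times>K). (x ^ card (fst ` A) * u ^ rk E (fst ` A)) * x ^ (card A - card (fst ` A)))"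
      unfolding P_poly_def clone_V_def K_def[symmetric]
    proof (rule sum.cong[OF refl])
      fix A assume A: "A \<in> Pow (V \<times> K)"
      have "x ^ card A = x ^ card (fst ` A) * x ^ (card A - card (fst ` A))"
        by (subst cardA[OF A]) (simp add: power_add)
      then show "x ^ card A * u ^ rk (clone_E E) A
          = (x ^ card (fst ` A) * u ^ rk E (fst ` A)) * x ^ (card A - card (fst ` A))"
        using rkA[OF A] by (simp add: algebra_simps)
    qed
    also have "\<dots> = (\<Sum>B\<in>Pow V. (x ^ card B * u ^ rk E B) * (\<Sum>S\<in>Pow K - {{}}. x ^ (card S - 1)) ^ card B)"
      by (rule count_sum[OF finV finK])
    also have "\<dots> = (\<Sum>B\<in>Pow V. ((1 + x) ^ k - 1) ^ card B * u ^ rk E B)"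
    proof -
      have hx: "x * (\<Sum>S\<in>Pow K - {{}}. x ^ (card S - 1)) = (1 + x) ^ k - 1"
        unfolding sum_pow_card_nonempty[OF finK] cK power_diff_1_eq by simp
      have "x ^ card B * u ^ rk E B * (\<Sum>S\<in>Pow K - {{}}. x ^ (card S - 1)) ^ card B
          = ((1 + x) ^ k - 1) ^ card B * u ^ rk E B" for B
        unfolding hx[symmetric] power_mult_distrib by (simp only: mult_ac)
      then show ?thesis by simp
    qed
    finally show ?thesis unfolding P_poly_def .
  qed
  have Q: "q_poly (clone_V V k) (clone_E E) x y = q_poly V E ((x - 1) * (\<Sum>i<k. y ^ i) + 1) (y ^ k)"
  proof -
    define s where "s = (\<Sum>i<k. y ^ i)"
    have "q_poly (clone_V V k) (clone_E E) x y
       = (\<Sum>A\<in>Pow (V\<times>K). ((x - 1) ^ rk E (fst ` A) * (y - 1) ^ (card (fst ` A) - rk E (fst ` A)))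
             * (y - 1) ^ (card A - card (fst ` A)))"
      unfolding q_poly_def clone_V_def K_def[symmetric]
    proof (rule sum.cong[OF refl])
      fix A assume A: "A \<in> Pow (V \<times> K)"
      have "card A - rk E (fst ` A) = (card (fst ` A) - rk E (fst ` A)) + (card A - card (fst ` A))"
        using rkB[OF A] rkBA[OF A] cardA[OF A] by linarith
      then show "(x - 1) ^ rk (clone_E E) A * (y - 1) ^ (card A - rk (clone_E E) A)
          = ((x - 1) ^ rk E (fst ` A) * (y - 1) ^ (card (fst ` A) - rk E (fst ` A)))
             * (y - 1) ^ (card A - card (fst ` A))"
        using rkA[OF A] by (simp add: power_add algebra_simps)
    qed
    also have "\<dots> = (\<Sum>B\<in>Pow V. ((x - 1) ^ rk E B * (y - 1) ^ (card B - rk E B))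
              * (\<Sum>S\<in>Pow K - {{}}. (y - 1) ^ (card S - 1)) ^ card B)"
      by (rule count_sum[OF finV finK])
    also have "\<dots> = (\<Sum>B\<in>Pow V. ((x - 1) * s) ^ rk E B * ((y - 1) * s) ^ (card B - rk E B))"
    proof (rule sum.cong[OF refl])
      fix B assume B: "B \<in> Pow V"
      have fB: "finite B" using B finV finite_subset by blast
      have le: "rk E B \<le> card B" using rk_le[OF fB] .
      have ss: "(\<Sum>S\<in>Pow K - {{}}. (y - 1) ^ (card S - 1)) = s"
        unfolding sum_pow_card_nonempty[OF finK] cK s_def by simp
      have sb: "s ^ card B = s ^ rk E B * s ^ (card B - rk E B)"
        using le by (simp add: power_add[symmetric])
      then show "(x - 1) ^ rk E B * (y - 1) ^ (card B - rk E B) * (\<Sum>S\<in>Pow K - {{}}. (y - 1) ^ (card S - 1)) ^ card B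
          = ((x - 1) * s) ^ rk E B * ((y - 1) * s) ^ (card B - rk E B)"
        unfolding ss sb power_mult_distrib by (simp only: mult_ac)
    qed
    also have "\<dots> = q_poly V E ((x - 1) * s + 1) (y ^ k)"
      unfolding q_poly_def s_def power_diff_1_eq by simp
    finally show ?thesis unfolding s_def .
  qed
  show ?thesis using P Q by simp
qed

end
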